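(* For $\lambda>0$ and $c\in\mathbb R$ let $\mathbf u^{\lambda,c}$ be the unique continuous viscosity solution of $(B+\lambda\,\mathrm{Id})\mathbf u+\mathbb H(x,D\mathbf u)=c\mathbbm 1$ in $M$, and let $\mathbf u^0$ be the uniform limit on $M$, as $\lambda\to0^+$, of $\mathbf u^{\lambda,c(\mathbb H)}$ (this limit exists and is a solution of the critical system). Then, for every $c\in\mathbb R$, as $\lambda\to0^+$: the functions $\lambda\mathbf u^{\lambda,c}$ converge uniformly on $M$ to the constant vector $(c-c(\mathbb H))\mathbbm 1$, and the functions $\widehat{\mathbf u}^{\lambda,c}:=\mathbf u^{\lambda,c}-\big(\min_i\min_{x\in M}u^{\lambda,c}_i(x)\big)\mathbbm 1$ converge uniformly on $M$ to $\mathbf u^0-\big(\min_i\min_{x\in M}u^0_i(x)\big)\mathbbm 1$.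
   Context: Let $M=\mathbb T^N$ be the flat $N$-dimensional torus, with $TM=T^*M=M\times\mathbb R^N$. Let $m\ge1$ and let $H_1,\dots,H_m:T^*M\to\mathbb R$ be continuous functions such that: (H1) $p\mapsto H_i(x,p)$ is convex for every $x\in M$; (H2) there exist coercive functions $\alpha,\beta:[0,\infty)\to\mathbb R$ with $\alpha(|p|)\le H_i(x,p)\le\beta(|p|)$ for all $(x,p)$ and all $i$. Let $B=(b_{ij})$ be a real $m\times m$ matrix with $b_{ij}\le0$ for $j\ne i$, $\sum_{j=1}^m b_{ij}=0$ for every $i$, and irreducible: for every nonempty proper subset $\mathcal I\subsetneq\{1,\dots,m\}$ there exist $i\in\mathcal I$, $j\notin\mathcal I$ with $b_{ij}\neq0$. Write $\mathbbm 1=(1,\dots,1)^T$ and $\mathbb H(x,D\mathbf u)=(H_1(x,Du_1),\dots,H_m(x,Du_m))^T$. The system $(B+\lambda\mathrm{Id})\mathbf u+\mathbb H(x,D\mathbf u)=c\mathbbm 1$ means $\sum_j b_{ij}u_j+\lambda u_i+H_i(x,Du_i)=c$, $i=1,\dots,m$, for continuous $\mathbf u:M\to\mathbb R^m$, in the viscosity sense (subsolution: $H_i(x,p)+((B+\lambda\mathrm{Id})\mathbf u(x))_i\le c$ for all $p\in D^+u_i(x)$; supersolution: $\ge c$ for all $p\in D^-u_i(x)$; solution: both). The critical value $c(\mathbb H)$ is the unique $c$ for which the system with $\lambda=0$ admits a viscosity solution; the critical system is the one with $\lambda=0$, $c=c(\mathbb H)$. *)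

theory Defs
  imports "HOL-Analysis.Analysis"
begin

text \<open>The flat torus M = R^N / Z^N is represented by Z^N-periodic functions on R^N
  (type real^'n with 'n a finite index type, N = CARD('n)); T^*M = M x R^N.\<close>

definition lattice_pt :: "real^'n \<Rightarrow> bool" where
  "lattice_pt z \<longleftrightarrow> (\<forall>j. z $ j \<in> \<int>)"

definition periodic_fn :: "(real^'n \<Rightarrow> 'b) \<Rightarrow> bool" where
  "periodic_fn f \<longleftrightarrow> (\<forall>x z. lattice_pt z \<longrightarrow> f (x + z) = f x)"

definition superdiff :: "(real^'n \<Rightarrow> real) \<Rightarrow> real^'n \<Rightarrow> (real^'n) set" where
  "superdiff u x = {p. \<forall>e>0. \<exists>d>0. \<forall>y. dist y x < d \<longrightarrow>
       u y \<le> u x + p \<bullet> (y - x) + e * norm (y - x)}"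

definition subdiff :: "(real^'n \<Rightarrow> real) \<Rightarrow> real^'n \<Rightarrow> (real^'n) set" where
  "subdiff u x = {p. \<forall>e>0. \<exists>d>0. \<forall>y. dist y x < d \<longrightarrow>
       u y \<ge> u x + p \<bullet> (y - x) - e * norm (y - x)}"

definition visc_sol ::
  "nat \<Rightarrow> (nat \<Rightarrow> nat \<Rightarrow> real) \<Rightarrow> (nat \<Rightarrow> real^'n \<Rightarrow> real^'n \<Rightarrow> real) \<Rightarrow> real \<Rightarrow> real
   \<Rightarrow> (nat \<Rightarrow> real^'n \<Rightarrow> real) \<Rightarrow> bool" where
  "visc_sol m B H lam c u \<longleftrightarrow>
     (\<forall>i<m. continuous_on UNIV (u i) \<and> periodic_fn (u i)) \<and>
     (\<forall>i<m. \<forall>x. \<forall>p\<in>superdiff (u i) x.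
        H i x p + (\<Sum>j<m. B i j * u j x) + lam * u i x \<le> c) \<and>
     (\<forall>i<m. \<forall>x. \<forall>p\<in>subdiff (u i) x.
        H i x p + (\<Sum>j<m. B i j * u j x) + lam * u i x \<ge> c)"

definition crit_value ::
  "nat \<Rightarrow> (nat \<Rightarrow> nat \<Rightarrow> real) \<Rightarrow> (nat \<Rightarrow> real^'n \<Rightarrow> real^'n \<Rightarrow> real) \<Rightarrow> real" where
  "crit_value m B H = (THE c. \<exists>u. visc_sol m B H 0 c u)"

definition min_all :: "nat \<Rightarrow> (nat \<Rightarrow> real^'n \<Rightarrow> real) \<Rightarrow> real" where
  "min_all m u = (MIN i\<in>{..<m}. (INF x. u i x))"

end

theory Submission
  imports Defs
begin

definition fl :: "real^'n \<Rightarrow> real^'n" where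
  "fl x = (\<chi> j. of_int \<lfloor>x$j\<rfloor>)"

lemma fl_lat: "lattice_pt (fl x)"
  unfolding lattice_pt_def fl_def by simp

lemma fl_box: "x - fl x \<in> cbox 0 1"
  unfolding mem_box_cart fl_def
  by (auto simp: of_int_floor_le) (smt (verit) floor_correct of_int_add of_int_1)

lemma per_shift: "periodic_fn f \<Longrightarrow> lattice_pt z \<Longrightarrow> f (y - z) = f y"
  unfolding periodic_fn_def by (metis diff_add_cancel)

lemma per_bounded:
  fixes f :: "real^'n \<Rightarrow> real"
  assumes "continuous_on UNIV f" "periodic_fn f"
  shows "\<exists>b. \<forall>x. \<bar>f x\<bar> \<le> b"
proof -
  have "compact (f ` cbox 0 1)"
    by (rule compact_continuous_image) (auto intro: continuous_on_subset[OF assms(1)])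
  then obtain a where a: "\<forall>y\<in>f ` cbox 0 1. norm y \<le> a"
    using compact_imp_bounded bounded_iff by metis
  have "\<bar>f x\<bar> \<le> a" for x
  proof -
    have "f x = f (x - fl x)" using per_shift[OF assms(2) fl_lat] by simp
    then show ?thesis using a fl_box[of x] by auto
  qed
  then show ?thesis by blast
qed

lemma finite_bound:
  fixes f :: "nat \<Rightarrow> 'a \<Rightarrow> real"
  assumes "\<And>i. i < m \<Longrightarrow> \<exists>b. \<forall>x. \<bar>f i x\<bar> \<le> b"
  shows "\<exists>b. \<forall>i<m. \<forall>x. \<bar>f i x\<bar> \<le> b"
proof -
  obtain bf where bf: "\<forall>i<m. \<forall>x. \<bar>f i x\<bar> \<le> bf i"
    using assms by metis
  have "\<bar>f i x\<bar> \<le> (\<Sum>i<m. \<bar>bf i\<bar>)" if "i < m" for i x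
  proof -
    have "\<bar>bf i\<bar> \<le> (\<Sum>i<m. \<bar>bf i\<bar>)"
      by (rule member_le_sum) (use that in auto)
    moreover have "\<bar>f i x\<bar> \<le> bf i" using bf that by blast
    ultimately show ?thesis by linarith
  qed
  then show ?thesis by blast
qed

lemma finite_delta:
  fixes m :: nat
  assumes "\<And>i. i < m \<Longrightarrow> \<exists>d>0. P i (d::real)"
    and mono: "\<And>i d d'. P i d \<Longrightarrow> 0 < d' \<Longrightarrow> d' \<le> d \<Longrightarrow> P i d'"
    and "m > 0"
  shows "\<exists>d>0. \<forall>i<m. P i d"
proof -
  obtain df where df: "\<forall>i<m. df i > 0 \<and> P i (df i)"
    using assms(1) by metis
  define d where "d = Min (df ` {..<m})"
  have "d \<in> df ` {..<m}" unfolding d_def using \<open>m>0\<close> by (intro Min_in) auto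
  then have dpos: "d > 0" using df by auto
  have "P i d" if "i < m" for i
    using mono[of i "df i" d] df that dpos unfolding d_def by (simp add: Min_le)
  then show ?thesis using dpos by blast
qed

lemma norm_add_sq:
  fixes a b :: "'a::real_inner"
  shows "(norm (a + b))^2 = (norm a)^2 + 2 * (a \<bullet> b) + (norm b)^2"
  by (simp add: power2_norm_eq_inner inner_add_left inner_add_right inner_commute)

lemma scale_eq: "(A::real) = B + 2*C + D \<Longrightarrow> k*A = k*B + 2*k*C + k*D"
  by (simp add: algebra_simps)

lemma superdiff_max:
  fixes f :: "real^'n \<Rightarrow> real"
  assumes k: "k > 0"
    and mx: "\<And>x'. f x' - k * (norm (x' - y))^2 \<le> f x - k * (norm (x - y))^2"
  shows "(2*k) *\<^sub>R (x - y) \<in> superdiff f x"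
  unfolding superdiff_def
proof (clarify)
  fix e :: real assume e: "e > 0"
  show "\<exists>d>0. \<forall>x'. dist x' x < d \<longrightarrow>
     f x' \<le> f x + ((2*k) *\<^sub>R (x - y)) \<bullet> (x' - x) + e * norm (x' - x)"
  proof (intro exI[of _ "e/k"] conjI allI impI)
    show "e/k > 0" using e k by simp
    fix x' assume d: "dist x' x < e/k"
    have eq: "x' - y = (x' - x) + (x - y)" by simp
    have "(norm (x' - y))^2 = (norm (x'-x))^2 + 2 * ((x'-x) \<bullet> (x - y)) + (norm (x-y))^2"
      unfolding eq by (rule norm_add_sq)
    from scale_eq[OF this, of k] have 1: "f x' \<le> f x + 2*k*((x'-x) \<bullet> (x - y)) + k * (norm (x'-x))^2"
      using mx[of x'] by linarith
    have "k * norm (x'-x) \<le> e" using d k by (simp add: dist_norm field_simps)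
    then have "norm (x'-x) * (k * norm (x'-x)) \<le> norm (x'-x) * e"
      by (intro mult_left_mono) auto
    then have "k * (norm (x'-x))^2 \<le> e * norm (x'-x)"
      by (simp add: power2_eq_square algebra_simps)
    moreover have "((2*k) *\<^sub>R (x - y)) \<bullet> (x' - x) = 2*k*((x'-x) \<bullet> (x - y))"
      by (simp add: inner_commute)
    ultimately show "f x' \<le> f x + ((2*k) *\<^sub>R (x - y)) \<bullet> (x' - x) + e * norm (x' - x)"
      using 1 by linarith
  qed
qed

lemma subdiff_min:
  fixes g :: "real^'n \<Rightarrow> real"
  assumes k: "k > 0"
    and mx: "\<And>y'. - g y' - k * (norm (x - y'))^2 \<le> - g y - k * (norm (x - y))^2"
  shows "(2*k) *\<^sub>R (x - y) \<in> subdiff g y"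
  unfolding subdiff_def
proof (clarify)
  fix e :: real assume e: "e > 0"
  show "\<exists>d>0. \<forall>y'. dist y' y < d \<longrightarrow>
     g y + ((2*k) *\<^sub>R (x - y)) \<bullet> (y' - y) - e * norm (y' - y) \<le> g y'"
  proof (intro exI[of _ "e/k"] conjI allI impI)
    show "e/k > 0" using e k by simp
    fix y' assume d: "dist y' y < e/k"
    have eq: "x - y' = (x - y) + (y - y')" by simp
    have "(norm (x - y'))^2 = (norm (x-y))^2 + 2 * ((x-y) \<bullet> (y - y')) + (norm (y-y'))^2"
      unfolding eq by (rule norm_add_sq)
    moreover have "norm (y - y') = norm (y' - y)" by (rule norm_minus_commute)
    moreover have "(x-y) \<bullet> (y - y') = - ((x-y) \<bullet> (y' - y))"
      by (metis inner_minus_right minus_diff_eq)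
    ultimately have "(norm (x - y'))^2 = (norm (x-y))^2 + 2 * (- ((x-y) \<bullet> (y' - y))) + (norm (y'-y))^2"
      by simp
    from scale_eq[OF this, of k] have 1: "g y' \<ge> g y + 2*k*((x-y) \<bullet> (y' - y)) - k * (norm (y'-y))^2"
      using mx[of y'] by linarith
    have "k * norm (y'-y) \<le> e" using d k by (simp add: dist_norm field_simps)
    then have "norm (y'-y) * (k * norm (y'-y)) \<le> norm (y'-y) * e"
      by (intro mult_left_mono) auto
    then have "k * (norm (y'-y))^2 \<le> e * norm (y'-y)"
      by (simp add: power2_eq_square algebra_simps)
    moreover have "((2*k) *\<^sub>R (x - y)) \<bullet> (y' - y) = 2*k*((x-y) \<bullet> (y' - y))"
      by simp
    ultimately show "g y + ((2*k) *\<^sub>R (x - y)) \<bullet> (y' - y) - e * norm (y' - y) \<le> g y'"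
      using 1 by linarith
  qed
qed

lemma superdiff_const: "superdiff (\<lambda>x. f x + k) x = superdiff f x"
  unfolding superdiff_def by (simp add: algebra_simps)

lemma subdiff_const: "subdiff (\<lambda>x. f x + k) x = subdiff f x"
  unfolding subdiff_def by (simp add: algebra_simps)

lemma min_all_le:
  fixes f g :: "nat \<Rightarrow> real^'n \<Rightarrow> real"
  assumes m: "m \<ge> 1"
    and le: "\<And>i x. i < m \<Longrightarrow> g i x \<le> f i x + e"
    and bdd: "\<And>i. i < m \<Longrightarrow> bdd_below (range (g i))"
  shows "min_all m g \<le> min_all m f + e"
proof -
  have "min_all m g - e \<le> (INF x. f i x)" if i: "i < m" for i
  proof -
    have "min_all m g \<le> (INF x. g i x)"
      unfolding min_all_def using i by (intro Min_le) auto
    also have "(INF x. g i x) \<le> (INF x. f i x) + e"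
    proof -
      have "(INF x. g i x) - e \<le> (INF x. f i x)"
      proof (rule cINF_greatest)
        fix x
        have "(INF x. g i x) \<le> g i x" by (rule cINF_lower[OF bdd[OF i]]) simp
        then show "(INF x. g i x) - e \<le> f i x" using le[OF i, of x] by simp
      qed simp
      then show ?thesis by simp
    qed
    finally show ?thesis by simp
  qed
  moreover have "0 \<in> {..<m}" using m by simp
  then have ne: "{..<m} \<noteq> {}" by blast
  ultimately have "min_all m g - e \<le> min_all m f"
    unfolding min_all_def by (intro Min.boundedI) auto
  then show ?thesis by simp
qed

lemma comparison:
  fixes u v :: "nat \<Rightarrow> real^'n \<Rightarrow> real"
    and H :: "nat \<Rightarrow> real^'n \<Rightarrow> real^'n \<Rightarrow> real"
    and B :: "nat \<Rightarrow> nat \<Rightarrow> real"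
    and \<alpha> :: "real \<Rightarrow> real"
  assumes lam: "lam > 0"
    and Hc: "\<And>i. i < m \<Longrightarrow> continuous_on UNIV (\<lambda>(x, p). H i x p)"
    and Hp: "\<And>i p. i < m \<Longrightarrow> periodic_fn (\<lambda>x. H i x p)"
    and acoer: "filterlim \<alpha> at_top at_top"
    and Hb: "\<And>i x p. i < m \<Longrightarrow> \<alpha> (norm p) \<le> H i x p"
    and Boff: "\<And>i j. i < m \<Longrightarrow> j < m \<Longrightarrow> j \<noteq> i \<Longrightarrow> B i j \<le> 0"
    and Brow: "\<And>i. i < m \<Longrightarrow> (\<Sum>j<m. B i j) = 0"
    and uc: "\<And>i. i < m \<Longrightarrow> continuous_on UNIV (u i) \<and> periodic_fn (u i)"
    and vc: "\<And>i. i < m \<Longrightarrow> continuous_on UNIV (v i) \<and> periodic_fn (v i)"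
    and usub: "\<And>i x p. i < m \<Longrightarrow> p \<in> superdiff (u i) x \<Longrightarrow>
                 H i x p + (\<Sum>j<m. B i j * u j x) + lam * u i x \<le> c"
    and vsup: "\<And>i x p. i < m \<Longrightarrow> p \<in> subdiff (v i) x \<Longrightarrow>
                 H i x p + (\<Sum>j<m. B i j * v j x) + lam * v i x \<ge> c"
    and i0: "i0 < m"
  shows "u i0 x0 \<le> v i0 x0"
proof (rule ccontr)
  assume "\<not> u i0 x0 \<le> v i0 x0"
  define \<theta> where "\<theta> = u i0 x0 - v i0 x0"
  have th: "\<theta> > 0" using \<open>\<not> u i0 x0 \<le> v i0 x0\<close> unfolding \<theta>_def by simp
  obtain Mu where Mu: "\<forall>i<m. \<forall>x. \<bar>u i x\<bar> \<le> Mu"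
    using finite_bound[of m u] per_bounded uc by metis
  obtain Mv where Mv: "\<forall>i<m. \<forall>x. \<bar>v i x\<bar> \<le> Mv"
    using finite_bound[of m v] per_bounded vc by metis
  define Mb where "Mb = max Mu Mv"
  have Mbu: "\<bar>u i x\<bar> \<le> Mb" "\<bar>v i x\<bar> \<le> Mb" if "i < m" for i x
  proof -
    show "\<bar>u i x\<bar> \<le> Mb" using Mu that unfolding Mb_def by (meson le_max_iff_disj)
    show "\<bar>v i x\<bar> \<le> Mb" using Mv that unfolding Mb_def by (meson le_max_iff_disj)
  qed
  have Mb0: "Mb \<ge> 0" using Mbu(1)[OF i0, of x0] by simp
  define SB where "SB = (\<Sum>i<m. \<Sum>j<m. \<bar>B i j\<bar>)"
  define K where "K = \<bar>c\<bar> + SB * Mb + lam * Mb"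
  have "eventually (\<lambda>t. K < \<alpha> t) at_top"
    using acoer unfolding filterlim_at_top_dense by blast
  then obtain R where R: "\<And>t. t \<ge> R \<Longrightarrow> \<alpha> t > K"
    unfolding eventually_at_top_linorder by blast
  have pbound: "norm p \<le> R" if i: "i < m" and p: "p \<in> superdiff (u i) x" for i x p
  proof (rule ccontr)
    assume "\<not> norm p \<le> R"
    then have "\<alpha> (norm p) > K" using R by simp
    have sumb: "\<bar>\<Sum>j<m. B i j * u j x\<bar> \<le> SB * Mb"
    proof -
      have "\<bar>\<Sum>j<m. B i j * u j x\<bar> \<le> (\<Sum>j<m. \<bar>B i j * u j x\<bar>)" by (rule sum_abs)
      also have "\<dots> \<le> (\<Sum>j<m. \<bar>B i j\<bar> * Mb)"
        by (intro sum_mono) (simp add: abs_mult mult_left_mono Mbu)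
      also have "\<dots> = (\<Sum>j<m. \<bar>B i j\<bar>) * Mb" by (simp add: sum_distrib_right)
      also have "(\<Sum>j<m. \<bar>B i j\<bar>) \<le> SB" unfolding SB_def
        by (rule member_le_sum[where f = "\<lambda>i. \<Sum>j<m. \<bar>B i j\<bar>"]) (use i in \<open>auto intro: sum_nonneg\<close>)
      then have "(\<Sum>j<m. \<bar>B i j\<bar>) * Mb \<le> SB * Mb" using Mb0 by (rule mult_right_mono)
      finally show ?thesis .
    qed
    have "- Mb \<le> u i x" using Mbu(1)[OF i, of x] by (simp add: abs_le_iff)
    then have "lam * (- Mb) \<le> lam * u i x" using lam by (intro mult_left_mono) auto
    then have "lam * u i x \<ge> - (lam * Mb)" by simp
    then have "H i x p \<le> K" using usub[OF i p] sumb unfolding K_def by linarith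
    then show False using Hb[OF i, of p x] \<open>\<alpha> (norm p) > K\<close> by linarith
  qed
  obtain D where D: "\<And>x. x \<in> cbox (0::real^'n) 1 \<Longrightarrow> norm x \<le> D"
    using bounded_cbox[of "0::real^'n" 1] unfolding bounded_iff by blast
  have D0: "D \<ge> 0" using D[of 0] by (simp add: mem_box_cart)
  define e where "e = lam * \<theta> / 2"
  have e0: "e > 0" using lam th unfolding e_def by simp
  define P where "P = (\<lambda>i d. \<forall>a b p. norm a \<le> D + 1 \<longrightarrow> norm b \<le> D + 1 \<longrightarrow> norm p \<le> R
            \<longrightarrow> dist a b < d \<longrightarrow> \<bar>H i a p - H i b p\<bar> < e)"
  have "\<exists>d>0. \<forall>i<m. P i d"
  proof (rule finite_delta)
    fix i assume i: "i < m"
    let ?S = "cball (0::real^'n) (D+1) \<times> cball (0::real^'n) R"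
    have "uniformly_continuous_on ?S (\<lambda>(x, p). H i x p)"
      by (intro compact_uniformly_continuous continuous_on_subset[OF Hc[OF i]] compact_Times) auto
    then obtain d where d: "d > 0" and dd: "\<And>z z'. z \<in> ?S \<Longrightarrow> z' \<in> ?S \<Longrightarrow> dist z' z < d \<Longrightarrow>
         dist ((\<lambda>(x, p). H i x p) z') ((\<lambda>(x, p). H i x p) z) < e"
      unfolding uniformly_continuous_on_def using e0 by metis
    have "P i d" unfolding P_def
    proof (intro allI impI)
      fix a b p :: "real^'n"
      assume "norm a \<le> D + 1" "norm b \<le> D + 1" "norm p \<le> R" "dist a b < d"
      then show "\<bar>H i a p - H i b p\<bar> < e"
        using dd[of "(b, p)" "(a, p)"] by (simp add: dist_Pair_Pair dist_real_def)
    qed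
    then show "\<exists>d>0. P i d" using d by blast
  next
    fix i d d' assume "P i d" "0 < d'" "d' \<le> d"
    then show "P i d'" unfolding P_def by force
  next
    show "0 < m" using i0 by simp
  qed
  then obtain \<delta> where \<delta>0: "\<delta> > 0" and \<delta>: "\<And>i. i < m \<Longrightarrow> P i \<delta>" by blast
  define s where "s = min \<delta> 1"
  have s0: "s > 0" using \<delta>0 unfolding s_def by simp
  define k where "k = 2 * Mb / s^2 + 1"
  have k1: "k \<ge> 1" unfolding k_def using Mb0 s0 by simp
  have k0: "k > 0" using k1 by simp
  have ks: "2 * Mb / k < s^2"
  proof -
    have "2 * Mb < s^2 * k" unfolding k_def using s0 by (simp add: field_simps)
    then show ?thesis using k0 by (simp add: field_simps)
  qed
  define \<Phi> where "\<Phi> = (\<lambda>i x y. u i x - v i y - k * (norm (x - y))^2)"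
  define Rr where "Rr = D + 4 * Mb + 1"
  define KS where "KS = cbox (0::real^'n) 1 \<times> cball (0::real^'n) Rr"
  have glob: "\<exists>z\<in>KS. \<forall>x y. \<Phi> i x y \<le> \<Phi> i (fst z) (snd z)" if i: "i < m" for i
  proof -
    have "continuous_on KS (\<lambda>z. \<Phi> i (fst z) (snd z))"
    proof -
      have cu: "continuous_on UNIV (u i)" and cv: "continuous_on UNIV (v i)" using uc vc i by auto
      have "continuous_on UNIV (\<lambda>z. u i (fst z) - v i (snd z) - k * (norm (fst z - snd z))^2 :: real)"
        by (intro continuous_intros continuous_on_compose2[OF cu] continuous_on_compose2[OF cv]) auto
      then show ?thesis unfolding \<Phi>_def by (rule continuous_on_subset) auto
    qed
    moreover have "compact KS" unfolding KS_def by (intro compact_Times) auto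
    moreover have "(0, 0) \<in> KS" unfolding KS_def using D0 Mb0 by (auto simp: mem_box_cart Rr_def)
    ultimately obtain z where z: "z \<in> KS" and zm: "\<And>z'. z' \<in> KS \<Longrightarrow> \<Phi> i (fst z') (snd z') \<le> \<Phi> i (fst z) (snd z)"
      using continuous_attains_sup[of KS "\<lambda>z. \<Phi> i (fst z) (snd z)"] by blast
    have "\<Phi> i x y \<le> \<Phi> i (fst z) (snd z)" for x y
    proof -
      define x' where "x' = x - fl x"
      define y' where "y' = y - fl x"
      have x'b: "x' \<in> cbox 0 1" unfolding x'_def by (rule fl_box)
      have sh: "\<Phi> i x y = \<Phi> i x' y'"
        unfolding \<Phi>_def x'_def y'_def
        using per_shift[OF conjunct2[OF uc[OF i]] fl_lat] per_shift[OF conjunct2[OF vc[OF i]] fl_lat]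
        by (simp add: algebra_simps)
      show ?thesis
      proof (cases "y' \<in> cball 0 Rr")
        case True
        then show ?thesis using zm[of "(x', y')"] x'b sh unfolding KS_def by simp
      next
        case False
        then have "norm y' > Rr" by (simp add: dist_norm)
        moreover have "norm x' \<le> D" using D x'b by blast
        ultimately have nl: "norm (x' - y') \<ge> 4 * Mb + 1"
          unfolding Rr_def using norm_triangle_ineq2[of y' x'] norm_minus_commute[of x' y'] by linarith
        then have "1 \<le> norm (x' - y')" using Mb0 by linarith
        then have "norm (x' - y') * 1 \<le> norm (x' - y') * norm (x' - y')"
          by (intro mult_left_mono) auto
        then have "norm (x' - y') \<le> (norm (x' - y'))^2"
          by (simp add: power2_eq_square)
        moreover have "1 * (norm (x' - y'))^2 \<le> k * (norm (x' - y'))^2"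
          using k1 by (intro mult_right_mono) auto
        ultimately have "4 * Mb + 1 \<le> k * (norm (x' - y'))^2"
          using nl by linarith
        then have "\<Phi> i x' y' \<le> \<Phi> i x' x'"
          using Mbu[OF i, of x'] Mbu[OF i, of y'] unfolding \<Phi>_def by (simp add: abs_le_iff)
        also have "\<dots> \<le> \<Phi> i (fst z) (snd z)"
        proof -
          have "x' \<in> cball 0 Rr" using \<open>norm x' \<le> D\<close> Mb0 unfolding Rr_def by simp
          then show ?thesis using zm[of "(x', x')"] x'b unfolding KS_def by simp
        qed
        finally show ?thesis using sh by simp
      qed
    qed
    then show ?thesis using z by blast
  qed
  then obtain zf where zf: "\<And>i. i < m \<Longrightarrow> \<forall>x y. \<Phi> i x y \<le> \<Phi> i (fst (zf i)) (snd (zf i))"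
    by metis
  define val where "val = (\<lambda>i. \<Phi> i (fst (zf i)) (snd (zf i)))"
  have "Max (val ` {..<m}) \<in> val ` {..<m}" using i0 by (intro Max_in) auto
  then obtain i where i: "i < m" and imax: "val i = Max (val ` {..<m})" by auto
  define x where "x = fst (zf i)"
  define y where "y = snd (zf i)"
  have maxall: "\<Phi> j x' y' \<le> \<Phi> i x y" if "j < m" for j x' y'
  proof -
    have "\<Phi> j x' y' \<le> val j" using zf[OF that] unfolding val_def by blast
    also have "\<dots> \<le> val i" unfolding imax using that by (intro Max_ge) auto
    finally show ?thesis unfolding val_def x_def y_def .
  qed
  have "\<theta> \<le> \<Phi> i x y" using maxall[OF i0, of x0 x0] unfolding \<Phi>_def \<theta>_def by simp
  then have gap: "u i x - v i y \<ge> \<theta> + k * (norm (x - y))^2" unfolding \<Phi>_def by simp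
  have "k * (norm (x - y))^2 \<le> 2 * Mb"
    using gap th Mbu[OF i, of x] Mbu[OF i, of y] by (simp add: abs_le_iff)
  then have "(norm (x - y))^2 \<le> 2 * Mb / k" using k0 by (simp add: field_simps)
  then have "(norm (x - y))^2 < s^2" using ks by linarith
  then have nxy: "norm (x - y) < s" by (rule power_less_imp_less_base) (use s0 in simp)
  define p where "p = (2*k) *\<^sub>R (x - y)"
  have psup: "p \<in> superdiff (u i) x" unfolding p_def
  proof (rule superdiff_max[OF k0])
    fix x' show "u i x' - k * (norm (x' - y))^2 \<le> u i x - k * (norm (x - y))^2"
      using maxall[OF i, of x' y] unfolding \<Phi>_def by linarith
  qed
  have psub: "p \<in> subdiff (v i) y" unfolding p_def
  proof (rule subdiff_min[OF k0])
    fix y' show "- v i y' - k * (norm (x - y'))^2 \<le> - v i y - k * (norm (x - y))^2"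
      using maxall[OF i, of x y'] unfolding \<Phi>_def by linarith
  qed
  have coup: "u j x - v j y \<le> u i x - v i y" if "j < m" for j
    using maxall[OF that, of x y] unfolding \<Phi>_def by simp
  have sumpos: "(\<Sum>j<m. B i j * (u j x - v j y)) \<ge> 0"
  proof -
    have "(\<Sum>j<m. B i j * (u j x - v j y)) = (\<Sum>j<m. B i j * ((u j x - v j y) - (u i x - v i y)))"
      using Brow[OF i] by (simp add: algebra_simps sum.distrib sum_subtractf sum_distrib_right[symmetric])
    also have "\<dots> \<ge> 0"
    proof (rule sum_nonneg)
      fix j assume j: "j \<in> {..<m}"
      show "0 \<le> B i j * ((u j x - v j y) - (u i x - v i y))"
      proof (cases "j = i")
        case True then show ?thesis by simp
      next
        case False
        then have "B i j \<le> 0" using Boff i j by simp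
        moreover have "(u j x - v j y) - (u i x - v i y) \<le> 0" using coup j by simp
        ultimately show ?thesis by (simp add: mult_nonpos_nonpos)
      qed
    qed
    finally show ?thesis .
  qed
  have "(\<Sum>j<m. B i j * (u j x - v j y)) = (\<Sum>j<m. B i j * u j x) - (\<Sum>j<m. B i j * v j y)"
    by (simp add: algebra_simps sum_subtractf)
  then have main: "lam * (u i x - v i y) \<le> H i y p - H i x p"
    using usub[OF i psup] vsup[OF i psub] sumpos by (simp add: algebra_simps)
  have "k * (norm (x - y))^2 \<ge> 0" using k0 by simp
  then have "\<theta> \<le> u i x - v i y" using gap by linarith
  then have "lam * \<theta> \<le> lam * (u i x - v i y)" using lam by (intro mult_left_mono) auto
  define a where "a = x - fl x"
  define b where "b = y - fl x"
  have Ha: "H i x p = H i a p" unfolding a_def using per_shift[OF Hp[OF i] fl_lat] by simp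
  have Hb': "H i y p = H i b p" unfolding b_def using per_shift[OF Hp[OF i] fl_lat] by simp
  have na: "norm a \<le> D" using D fl_box unfolding a_def by blast
  have ab: "b - a = y - x" unfolding a_def b_def by simp
  have nb: "norm b \<le> D + 1"
  proof -
    have "norm b \<le> norm a + norm (b - a)" using norm_triangle_ineq[of a "b - a"] by simp
    moreover have "norm (b - a) < 1" unfolding ab using nxy norm_minus_commute[of x y] s_def by simp
    ultimately show ?thesis using na by linarith
  qed
  have "dist b a < \<delta>" unfolding dist_norm ab using nxy norm_minus_commute[of x y] s_def by simp
  then have "\<bar>H i b p - H i a p\<bar> < e"
    using \<delta>[OF i] nb na pbound[OF i psup] unfolding P_def by simp
  then have "H i b p - H i a p < e" by linarith
  then have "H i y p - H i x p < lam * \<theta> / 2" using Ha Hb' unfolding e_def by simp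
  moreover have "lam * \<theta> > 0" using lam th by simp
  ultimately show False using main \<open>lam * \<theta> \<le> lam * (u i x - v i y)\<close> by linarith
qed

lemma sol_bound:
  assumes "visc_sol m B H lam c (u :: nat \<Rightarrow> real^'n \<Rightarrow> real)"
  shows "\<exists>b. \<forall>i<m. \<forall>x. \<bar>u i x\<bar> \<le> b"
  using assms unfolding visc_sol_def by (intro finite_bound per_bounded) auto

lemma bdd_from_bound:
  assumes "\<forall>x. \<bar>(f::'a \<Rightarrow> real) x\<bar> \<le> b" shows "bdd_below (range f)"
proof (rule bdd_belowI[of _ "-b"])
  fix y assume "y \<in> range f"
  then obtain x where "y = f x" by blast
  then show "-b \<le> y" using assms[rule_format, of x] by (simp add: abs_le_iff)
qed

theorem theorem2:
  fixes m :: nat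
    and H :: "nat \<Rightarrow> real^'n \<Rightarrow> real^'n \<Rightarrow> real"
    and B :: "nat \<Rightarrow> nat \<Rightarrow> real"
    and \<alpha> \<beta> :: "real \<Rightarrow> real"
    and U :: "real \<Rightarrow> real \<Rightarrow> nat \<Rightarrow> real^'n \<Rightarrow> real"
    and u0 :: "nat \<Rightarrow> real^'n \<Rightarrow> real"
  assumes m_pos: "m \<ge> 1"
    and H_cont: "\<And>i. i < m \<Longrightarrow> continuous_on UNIV (\<lambda>(x, p). H i x p)"
    and H_per: "\<And>i p. i < m \<Longrightarrow> periodic_fn (\<lambda>x. H i x p)"
    and H_conv: "\<And>i x. i < m \<Longrightarrow> convex_on UNIV (H i x)"
    and \<alpha>_coer: "filterlim \<alpha> at_top at_top"
    and \<beta>_coer: "filterlim \<beta> at_top at_top"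
    and H_bounds: "\<And>i x p. i < m \<Longrightarrow> \<alpha> (norm p) \<le> H i x p \<and> H i x p \<le> \<beta> (norm p)"
    and B_offdiag: "\<And>i j. i < m \<Longrightarrow> j < m \<Longrightarrow> j \<noteq> i \<Longrightarrow> B i j \<le> 0"
    and B_rows: "\<And>i. i < m \<Longrightarrow> (\<Sum>j<m. B i j) = 0"
    and B_irred: "\<And>I. I \<noteq> {} \<Longrightarrow> I \<subset> {..<m} \<Longrightarrow> \<exists>i\<in>I. \<exists>j\<in>{..<m} - I. B i j \<noteq> 0"
    and U_sol: "\<And>lam c. lam > 0 \<Longrightarrow> visc_sol m B H lam c (U lam c)"
    and u0_lim: "uniform_limit ({..<m} \<times> UNIV)
                   (\<lambda>lam (i, x). U lam (crit_value m B H) i x) (\<lambda>(i, x). u0 i x) (at_right 0)"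
  shows "\<forall>c::real.
           uniform_limit ({..<m} \<times> UNIV) (\<lambda>lam (i, x). lam * U lam c i x)
              (\<lambda>(i, x). c - crit_value m B H) (at_right 0)
         \<and> uniform_limit ({..<m} \<times> UNIV) (\<lambda>lam (i, x). U lam c i x - min_all m (U lam c))
              (\<lambda>(i, x). u0 i x - min_all m u0) (at_right 0)"
proof (intro allI conjI)
  fix c :: real
  define cs where "cs = crit_value m B H"
  have Hb: "\<And>i x p. i < m \<Longrightarrow> \<alpha> (norm p) \<le> H i x p" using H_bounds by blast
  have eq: "U lam c i x = U lam cs i x + (c - cs) / lam" if lam: "lam > 0" and i: "i < m" for lam i x
  proof -
    define V where "V = (\<lambda>i x. U lam cs i x + (c - cs) / lam)"
    have S: "visc_sol m B H lam cs (U lam cs)" using U_sol[OF lam] .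
    have T: "visc_sol m B H lam c (U lam c)" using U_sol[OF lam] .
    have Vc: "continuous_on UNIV (V i) \<and> periodic_fn (V i)" if "i < m" for i
      using S that unfolding visc_sol_def V_def periodic_fn_def
      by (auto intro!: continuous_intros)
    have sumV: "(\<Sum>j<m. B i j * V j x) = (\<Sum>j<m. B i j * U lam cs j x)" if "i < m" for i x
    proof -
      have "(\<Sum>j<m. B i j * V j x) = (\<Sum>j<m. B i j * U lam cs j x) + (\<Sum>j<m. B i j) * ((c - cs) / lam)"
        unfolding V_def by (simp add: distrib_left sum.distrib sum_distrib_right sum_divide_distrib)
      then show ?thesis using B_rows[OF that] by simp
    qed
    have lamV: "lam * V i x = lam * U lam cs i x + (c - cs)" for i x
      using lam unfolding V_def by (simp add: distrib_left)
    have Vi: "V i = (\<lambda>x. U lam cs i x + (c - cs) / lam)" for i unfolding V_def by simp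
    have Vsub: "H i x p + (\<Sum>j<m. B i j * V j x) + lam * V i x \<le> c"
      if "i < m" "p \<in> superdiff (V i) x" for i x p
    proof -
      have "p \<in> superdiff (U lam cs i) x" using that(2) unfolding Vi superdiff_const .
      then have "H i x p + (\<Sum>j<m. B i j * U lam cs j x) + lam * U lam cs i x \<le> cs"
        using S that(1) unfolding visc_sol_def by blast
      then show ?thesis using sumV[OF that(1)] lamV[of i x] by simp
    qed
    have Vsup: "H i x p + (\<Sum>j<m. B i j * V j x) + lam * V i x \<ge> c"
      if "i < m" "p \<in> subdiff (V i) x" for i x p
    proof -
      have "p \<in> subdiff (U lam cs i) x" using that(2) unfolding Vi subdiff_const .
      then have "H i x p + (\<Sum>j<m. B i j * U lam cs j x) + lam * U lam cs i x \<ge> cs"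
        using S that(1) unfolding visc_sol_def by blast
      then show ?thesis using sumV[OF that(1)] lamV[of i x] by simp
    qed
    have Tc: "continuous_on UNIV (U lam c i) \<and> periodic_fn (U lam c i)" if "i < m" for i
      using T that unfolding visc_sol_def by blast
    have Tsub: "H i x p + (\<Sum>j<m. B i j * U lam c j x) + lam * U lam c i x \<le> c"
      if "i < m" "p \<in> superdiff (U lam c i) x" for i x p
      using T that unfolding visc_sol_def by blast
    have Tsup: "H i x p + (\<Sum>j<m. B i j * U lam c j x) + lam * U lam c i x \<ge> c"
      if "i < m" "p \<in> subdiff (U lam c i) x" for i x p
      using T that unfolding visc_sol_def by blast
    have "U lam c i x \<le> V i x"
      by (rule comparison[OF lam H_cont H_per \<alpha>_coer Hb B_offdiag B_rows Tc Vc Tsub Vsup i])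
    moreover have "V i x \<le> U lam c i x"
      by (rule comparison[OF lam H_cont H_per \<alpha>_coer Hb B_offdiag B_rows Vc Tc Vsub Tsup i])
    ultimately show ?thesis unfolding V_def by simp
  qed
  have L: "eventually (\<lambda>lam. \<forall>i<m. \<forall>x. dist (U lam cs i x) (u0 i x) < e) (at_right 0)"
    if e: "e > 0" for e
    using u0_lim[unfolded uniform_limit_iff, rule_format, OF e] unfolding cs_def
    by (rule eventually_mono) auto
  have "eventually (\<lambda>lam. (\<forall>i<m. \<forall>x. dist (U lam cs i x) (u0 i x) < 1) \<and> lam \<in> {0<..<1}) (at_right 0)"
    using L[of 1] eventually_at_right_real[of 0 1] by (auto intro: eventually_conj)
  then obtain lam1 where lam1: "\<forall>i<m. \<forall>x. dist (U lam1 cs i x) (u0 i x) < 1" "lam1 > 0"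
    using eventually_happens'[OF trivial_limit_at_right_real] by force
  obtain b1 where b1: "\<forall>i<m. \<forall>x. \<bar>U lam1 cs i x\<bar> \<le> b1"
    using sol_bound[OF U_sol[OF lam1(2)]] by blast
  define Ku where "Ku = \<bar>b1\<bar> + 1"
  have Ku: "\<bar>u0 i x\<bar> \<le> Ku" if "i < m" for i x
    using lam1(1)[rule_format, OF that, of x] b1[rule_format, OF that, of x] unfolding Ku_def dist_real_def
    by (simp add: abs_le_iff abs_less_iff)
  have Ku0: "Ku \<ge> 0" unfolding Ku_def by simp
  have Ubdd: "bdd_below (range (U lam c' i))" if lp: "lam > 0" and ip: "i < m" for lam c' i
  proof -
    obtain b where "\<forall>i<m. \<forall>x. \<bar>U lam c' i x\<bar> \<le> b" using sol_bound[OF U_sol[OF lp]] by blast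
    then show ?thesis using ip by (intro bdd_from_bound) blast
  qed
  show "uniform_limit ({..<m} \<times> UNIV) (\<lambda>lam (i, x). lam * U lam c i x)
              (\<lambda>(i, x). c - crit_value m B H) (at_right 0)"
    unfolding uniform_limit_iff
  proof (intro allI impI)
    fix e :: real assume e: "e > 0"
    have ep: "e / (Ku + 2) > 0" using e Ku0 by simp
    have "eventually (\<lambda>lam. (\<forall>i<m. \<forall>x. dist (U lam cs i x) (u0 i x) < 1) \<and> lam \<in> {0<..<e / (Ku + 2)}) (at_right 0)"
      using L[of 1] eventually_at_right_real[OF ep] by (auto intro: eventually_conj)
    then show "eventually (\<lambda>lam. \<forall>z\<in>{..<m} \<times> UNIV. dist ((\<lambda>(i, x). lam * U lam c i x) z)
              ((\<lambda>(i, x). c - crit_value m B H) z) < e) (at_right 0)"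
    proof (rule eventually_mono)
      fix lam
      assume dl: "(\<forall>i<m. \<forall>x. dist (U lam cs i x) (u0 i x) < 1) \<and> lam \<in> {0<..<e / (Ku + 2)}"
      have d: "\<forall>i<m. \<forall>x. dist (U lam cs i x) (u0 i x) < 1" and l: "lam \<in> {0<..<e / (Ku + 2)}" using dl by auto
      have lam: "lam > 0" using l by simp
      have "dist (lam * U lam c i x) (c - cs) < e" if i: "i < m" for i x
      proof -
      have "lam * U lam c i x = lam * U lam cs i x + (c - cs)"
        using eq[OF lam i, of x] lam by (simp add: distrib_left)
      then have "dist (lam * U lam c i x) (c - cs) = lam * \<bar>U lam cs i x\<bar>"
        using lam by (simp add: dist_real_def abs_mult)
      also have "\<dots> \<le> lam * (Ku + 1)"
      proof -
        have "\<bar>U lam cs i x\<bar> \<le> Ku + 1" using d[rule_format, OF i, of x] Ku[OF i, of x] unfolding dist_real_def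
          by (simp add: abs_le_iff abs_less_iff)
        then show ?thesis using lam by (intro mult_left_mono) auto
      qed
      also have "\<dots> < lam * (Ku + 2)" using lam by simp
      also have "\<dots> < e" using l Ku0 by (simp add: field_simps)
      finally show ?thesis .
      qed
      then show "\<forall>z\<in>{..<m} \<times> UNIV. dist ((\<lambda>(i, x). lam * U lam c i x) z)
              ((\<lambda>(i, x). c - crit_value m B H) z) < e"
        unfolding cs_def by auto
    qed
  qed

  show "uniform_limit ({..<m} \<times> UNIV) (\<lambda>lam (i, x). U lam c i x - min_all m (U lam c))
              (\<lambda>(i, x). u0 i x - min_all m u0) (at_right 0)"
    unfolding uniform_limit_iff
  proof (intro allI impI)
    fix e :: real assume e: "e > 0"
    have ep: "e / 3 > 0" using e by simp
    have "eventually (\<lambda>lam. (\<forall>i<m. \<forall>x. dist (U lam cs i x) (u0 i x) < e / 3) \<and> lam \<in> {0<..<1}) (at_right 0)"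
      using L[OF ep] eventually_at_right_real[of 0 1] by (auto intro: eventually_conj)
    then show "eventually (\<lambda>lam. \<forall>z\<in>{..<m} \<times> UNIV. dist ((\<lambda>(i, x). U lam c i x - min_all m (U lam c)) z)
              ((\<lambda>(i, x). u0 i x - min_all m u0) z) < e) (at_right 0)"
    proof (rule eventually_mono)
      fix lam
      assume dl: "(\<forall>i<m. \<forall>x. dist (U lam cs i x) (u0 i x) < e / 3) \<and> lam \<in> {0<..<1}"
      have d: "\<forall>i<m. \<forall>x. dist (U lam cs i x) (u0 i x) < e / 3" and l: "lam \<in> {0<..<1}" using dl by auto
      have lam: "lam > 0" using l by simp
      define k where "k = (c - cs) / lam"
      have mm: "min_all m (U lam c) = min_all m (U lam cs) + k"
      proof (rule antisym)
        show "min_all m (U lam c) \<le> min_all m (U lam cs) + k"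
          by (rule min_all_le[OF m_pos _ Ubdd[OF lam]]) (simp_all add: eq[OF lam] k_def)
        have "min_all m (U lam cs) \<le> min_all m (U lam c) + - k"
          by (rule min_all_le[OF m_pos _ Ubdd[OF lam]]) (simp_all add: eq[OF lam] k_def)
        then show "min_all m (U lam cs) + k \<le> min_all m (U lam c)" by simp
      qed
      have u0bdd: "bdd_below (range (u0 j))" if "j < m" for j
        using Ku that by (intro bdd_from_bound) blast
      have m1: "min_all m (U lam cs) \<le> min_all m u0 + e / 3"
      proof (rule min_all_le[OF m_pos _ Ubdd[OF lam]])
        fix j x assume j: "j < m"
        have "\<bar>U lam cs j x - u0 j x\<bar> < e / 3" using d[rule_format, OF j, of x] unfolding dist_real_def .
        then show "U lam cs j x \<le> u0 j x + e / 3" unfolding abs_less_iff by linarith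
      qed
      have m2: "min_all m u0 \<le> min_all m (U lam cs) + e / 3"
      proof (rule min_all_le[OF m_pos _ u0bdd])
        fix j x assume j: "j < m"
        have "\<bar>U lam cs j x - u0 j x\<bar> < e / 3" using d[rule_format, OF j, of x] unfolding dist_real_def .
        then show "u0 j x \<le> U lam cs j x + e / 3" unfolding abs_less_iff by linarith
      qed
      have "dist (U lam c i x - min_all m (U lam c)) (u0 i x - min_all m u0) < e" if i: "i < m" for i x
      proof -
      have "U lam c i x - min_all m (U lam c) = U lam cs i x - min_all m (U lam cs)"
        using eq[OF lam i, of x] mm unfolding k_def by simp
      moreover have "\<bar>U lam cs i x - u0 i x\<bar> < e / 3" using d i unfolding dist_real_def by blast
      ultimately show ?thesis
        using m1 m2 unfolding dist_real_def abs_less_iff by linarith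
      qed
      then show "\<forall>z\<in>{..<m} \<times> UNIV. dist ((\<lambda>(i, x). U lam c i x - min_all m (U lam c)) z)
              ((\<lambda>(i, x). u0 i x - min_all m u0) z) < e" by auto
    qed
  qed

qed

end
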